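(* In the setting of the context (battery capacity $c$, nonnegative i.i.d. energy arrivals distributed as $X$, increasing concave reward $r$ with continuous derivative $r'$, and $r'(\underline{x})>r'(\overline{x})$), let $$c^*\triangleq\max\{c\ge 0:\ r'(c)\ge \mathbb{E}[r'(X)\mathbf{1}\{X<c\}]\},$$ which is the largest battery capacity for which the greedy policy is throughput-optimal. Then $$c^*\ge \underline{c}\triangleq\sup\{c\in(\underline{x},\overline{x}):\ r'(c)\ge \rho(c)\,\overline{r'}_{[\underline{x},c]}(\underline{\xi})\},\qquad \underline{\xi}\triangleq\max\left\{\frac{\mu-(1-\rho(c))\overline{x}}{\rho(c)},\,\underline{x}\right\}.$$ In particular, for $r(x)=\frac12\log(1+x)$, $$\underline{c}=\sup\{c\in(\underline{x},\overline{x}):\ c\le \overline{\zeta}(c)\},\qquad \overline{\zeta}(c)\triangleq\frac{(1-\rho(c))(1+\underline{x})+\rho(c)\underline{\xi}}{\rho(c)}.$$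
   Context: Setting: $X_1,X_2,\dots$ are i.i.d. copies of a nonnegative random variable $X$; a policy chooses $G_t=f_t(X_1,\dots,X_t)$; battery $B_t=\min\{B_{t-1}-G_{t-1}+X_t,c\}$ with $B_0=G_0=0$; admissibility means $G_t\le B_t$; throughput is $\liminf_n\frac1n\mathbb{E}[\sum_{t\le n}r(G_t)]$; the greedy policy is $G_t=B_t$. The reward $r:[0,\infty)\to[0,\infty)$ is monotonically increasing and concave with continuous derivative $r'$. Notation: $\rho(x)\triangleq\mathbb{P}(X<x)$, $\underline{x}\triangleq\max\{x\ge0:\rho(x)=0\}$, $\overline{x}\triangleq\inf\{x\ge0:\rho(x)=1\}$ (possibly $+\infty$; then $(1-\rho(c))\overline{x}=+\infty$ for $c<\overline{x}$ so $\underline{\xi}=\underline{x}$), $r'(\infty)\triangleq\lim_{x\to\infty}r'(x)$, $\mu\triangleq\mathbb{E}[X]$. For $c>\underline{x}$, $\overline{r'}_{[\underline{x},c]}$ denotes the upper concave envelope (smallest concave majorant) of $r'$ restricted to $[\underline{x},c]$. Logarithms are natural. *)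

theory Defs
  imports "HOL-Probability.Probability"
begin

definition rho :: "'a measure \<Rightarrow> ('a \<Rightarrow> real) \<Rightarrow> real \<Rightarrow> real" where
  "rho M X x = measure M {\<omega> \<in> space M. X \<omega> < x}"

definition xlow :: "'a measure \<Rightarrow> ('a \<Rightarrow> real) \<Rightarrow> real" where
  "xlow M X = (GREATEST x. x \<ge> 0 \<and> rho M X x = 0)"

text \<open>Upper end of the support, possibly infinite (Inf of the empty set is infinity).\<close>
definition xup :: "'a measure \<Rightarrow> ('a \<Rightarrow> real) \<Rightarrow> ereal" where
  "xup M X = Inf (ereal ` {x. x \<ge> 0 \<and> rho M X x = 1})"

definition mu :: "'a measure \<Rightarrow> ('a \<Rightarrow> real) \<Rightarrow> real" where
  "mu M X = integral\<^sup>L M X"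

definition deriv_at_xup :: "'a measure \<Rightarrow> ('a \<Rightarrow> real) \<Rightarrow> (real \<Rightarrow> real) \<Rightarrow> real" where
  "deriv_at_xup M X r' =
     (if xup M X = \<infinity> then Lim at_top r' else r' (real_of_ereal (xup M X)))"

text \<open>xi(c); if xup is infinite then (1 - rho c) * xup = infinity (c < xup), so xi = xlow.\<close>
definition xi :: "'a measure \<Rightarrow> ('a \<Rightarrow> real) \<Rightarrow> real \<Rightarrow> real" where
  "xi M X c =
     (if xup M X = \<infinity> then xlow M X
      else max ((mu M X - (1 - rho M X c) * real_of_ereal (xup M X)) / rho M X c) (xlow M X))"

definition concave_env :: "(real \<Rightarrow> real) \<Rightarrow> real \<Rightarrow> real \<Rightarrow> real \<Rightarrow> real" where
  "concave_env f a b x =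
     Inf {g x | g. concave_on {a..b} g \<and> (\<forall>y\<in>{a..b}. f y \<le> g y)}"

definition cstar :: "'a measure \<Rightarrow> ('a \<Rightarrow> real) \<Rightarrow> (real \<Rightarrow> real) \<Rightarrow> real" where
  "cstar M X r' = (GREATEST c. c \<ge> 0 \<and>
      r' c \<ge> integral\<^sup>L M (\<lambda>\<omega>. r' (X \<omega>) * indicator {..<c} (X \<omega>)))"

definition clow :: "'a measure \<Rightarrow> ('a \<Rightarrow> real) \<Rightarrow> (real \<Rightarrow> real) \<Rightarrow> real" where
  "clow M X r' = Sup {c. xlow M X < c \<and> ereal c < xup M X \<and>
      r' c \<ge> rho M X c * concave_env r' (xlow M X) c (xi M X c)}"

definition zeta :: "'a measure \<Rightarrow> ('a \<Rightarrow> real) \<Rightarrow> real \<Rightarrow> real" where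
  "zeta M X c = ((1 - rho M X c) * (1 + xlow M X) + rho M X c * xi M X c) / rho M X c"

end

theory Submission
  imports Defs
begin


context
  fixes r r' :: "real \<Rightarrow> real"
  assumes rmono: "mono_on {0..} r"
    and rconc: "concave_on {0..} r"
    and rder: "\<forall>x\<ge>0. (r has_real_derivative r' x) (at x within {0..})"
    and rcont: "continuous_on {0..} r'"
begin

lemma tangent_le:
  assumes "0 < c" "0 \<le> x"
  shows "r x - r c \<le> r' c * (x - c)"
proof -
  have cv: "convex_on {0..} (\<lambda>x. - r x)" using rconc by (simp add: concave_on_def)
  have d: "((\<lambda>x. - r x) has_field_derivative (- r' c)) (at c within {0..})"
    using rder assms by (auto intro!: derivative_eq_intros)
  have "(- r x) - (- r c) \<ge> (- r' c) * (x - c)"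
    by (rule convex_on_imp_above_tangent[OF cv _ _ _ d]) (use assms in auto)
  then show ?thesis by simp
qed

lemma rd_anti_pos:
  assumes "0 < x" "x \<le> y"
  shows "r' y \<le> r' x"
proof -
  have 1: "r y - r x \<le> r' x * (y - x)" using tangent_le assms by auto
  have 2: "r x - r y \<le> r' y * (x - y)" using tangent_le assms by auto
  show ?thesis
  proof (cases "x = y")
    case False
    with assms have "y - x > 0" by auto
    with 1 2 have "r' y * (y - x) \<le> r' x * (y - x)" by (simp add: algebra_simps)
    with \<open>y - x > 0\<close> show ?thesis by simp
  qed simp
qed

lemma rd_anti:
  assumes "0 \<le> x" "x \<le> y"
  shows "r' y \<le> r' x"
proof (cases "x = 0")
  case False with assms rd_anti_pos show ?thesis by auto
next
  case True
  show ?thesis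
  proof (cases "y = 0")
    case False
    with assms have y: "y > 0" by auto
    have "(r' \<longlongrightarrow> r' 0) (at 0 within {0..})"
      using rcont by (simp add: continuous_on_def)
    then have lim: "(r' \<longlongrightarrow> r' 0) (at_right 0)"
      by (rule tendsto_within_subset) auto
    have ev: "eventually (\<lambda>t. r' y \<le> r' t) (at_right (0::real))"
      using eventually_at_right_real[OF y] by eventually_elim (use rd_anti_pos in auto)
    have "r' y \<le> r' 0"
      by (rule tendsto_lowerbound[OF lim ev]) simp
    then show ?thesis using True by simp
  qed (use True in simp)
qed

lemma rd_nonneg:
  assumes "0 \<le> x"
  shows "0 \<le> r' x"
proof -
  have "r (x+2) - r (x+1) \<le> r' (x+1) * ((x + 2) - (x+1))"
    using tangent_le[of "x+1" "x+2"] assms by simp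
  moreover have "r (x+1) \<le> r (x+2)" using rmono assms by (auto intro: mono_onD)
  ultimately have "0 \<le> r' (x+1)" by simp
  also have "r' (x+1) \<le> r' x" using rd_anti assms by simp
  finally show ?thesis .
qed

end


context
  fixes M :: "'a measure" and X :: "'a \<Rightarrow> real"
  assumes P: "prob_space M"
    and Xm[measurable]: "X \<in> borel_measurable M"
    and Xnn: "\<forall>\<omega>\<in>space M. 0 \<le> X \<omega>"
begin

interpretation prob_space M by (rule P)

lemma sets_less[measurable]: "{\<omega> \<in> space M. X \<omega> < x} \<in> sets M"
  by measurable

lemma rho_mono: "x \<le> y \<Longrightarrow> rho M X x \<le> rho M X y"
  unfolding rho_def by (rule finite_measure_mono) (auto)

lemma rho_le1: "rho M X x \<le> 1"
  unfolding rho_def by simp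

lemma rho_nonneg: "0 \<le> rho M X x"
  unfolding rho_def by simp

lemma rho_nonpos: "x \<le> 0 \<Longrightarrow> rho M X x = 0"
proof -
  assume "x \<le> 0"
  then have "{\<omega> \<in> space M. X \<omega> < x} = {}" using Xnn by force
  then show ?thesis unfolding rho_def by (metis measure_empty)
qed

lemma rho_lim_seq:
  assumes "incseq d" "\<And>y. y < x \<Longrightarrow> \<exists>n. y \<le> d n" "\<And>n. d n \<le> x"
  shows "(\<lambda>n. rho M X (d n)) \<longlonglongrightarrow> rho M X x"
proof -
  have eq: "(\<Union>n. {\<omega> \<in> space M. X \<omega> < d n}) = {\<omega> \<in> space M. X \<omega> < x}"
  proof safe
    fix \<omega> n assume "X \<omega> < d n" then show "X \<omega> < x" using assms(3)[of n] by simp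
  next
    fix \<omega> assume "\<omega> \<in> space M" "X \<omega> < x"
    then obtain n where "(X \<omega> + x)/2 \<le> d n" using assms(2)[of "(X \<omega> + x)/2"] by auto
    with \<open>X \<omega> < x\<close> have "X \<omega> < d n" by simp
    with \<open>\<omega> \<in> space M\<close> show "\<omega> \<in> (\<Union>n. {\<omega> \<in> space M. X \<omega> < d n})" by blast
  qed
  have "(\<lambda>n. measure M {\<omega> \<in> space M. X \<omega> < d n}) \<longlonglongrightarrow> measure M (\<Union>n. {\<omega> \<in> space M. X \<omega> < d n})"
  proof (rule finite_Lim_measure_incseq)
    show "incseq (\<lambda>n. {\<omega> \<in> space M. X \<omega> < d n})"
      using assms(1) unfolding incseq_def by (auto intro: less_le_trans)
  qed auto
  then show ?thesis unfolding rho_def eq .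
qed

lemma rho_top: "(\<lambda>n. rho M X (real n)) \<longlonglongrightarrow> 1"
proof -
  have eq: "(\<Union>n. {\<omega> \<in> space M. X \<omega> < real n}) = space M"
    using reals_Archimedean2 by auto
  have "(\<lambda>n. measure M {\<omega> \<in> space M. X \<omega> < real n}) \<longlonglongrightarrow> measure M (\<Union>n. {\<omega> \<in> space M. X \<omega> < real n})"
    by (rule finite_Lim_measure_incseq) (auto simp: incseq_def)
  then show ?thesis unfolding rho_def eq by (simp add: prob_space)
qed

lemma rho_eventually_pos: "\<exists>B. rho M X B > 0"
proof -
  from rho_top have "eventually (\<lambda>n. rho M X (real n) > 1/2) sequentially"
    by (rule order_tendstoD) simp
  then obtain n where "rho M X (real n) > 1/2" by (auto simp: eventually_sequentially)
  then show ?thesis by (intro exI[of _ "real n"]) simp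
qed

lemma rho_big: "0 < e \<Longrightarrow> \<exists>B. \<forall>c\<ge>B. rho M X c > 1 - e"
proof -
  assume "0 < e"
  from rho_top have "eventually (\<lambda>n. rho M X (real n) > 1 - e) sequentially"
    by (rule order_tendstoD) (use \<open>0<e\<close> in simp)
  then obtain n where "rho M X (real n) > 1 - e" by (auto simp: eventually_sequentially)
  have "\<forall>c\<ge>real n. rho M X c > 1 - e"
  proof (intro allI impI)
    fix c assume "real n \<le> c"
    then have "rho M X (real n) \<le> rho M X c" by (rule rho_mono)
    with \<open>rho M X (real n) > 1 - e\<close> show "rho M X c > 1 - e" by linarith
  qed
  then show ?thesis by blast
qed

lemma AE_ge_of_rho0: "rho M X x = 0 \<Longrightarrow> AE \<omega> in M. x \<le> X \<omega>"
proof -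
  assume "rho M X x = 0"
  then have "emeasure M {\<omega> \<in> space M. X \<omega> < x} = 0"
    unfolding rho_def by (simp add: emeasure_eq_measure)
  then show ?thesis
    by (subst AE_iff_measurable[OF sets_less]) auto
qed

lemma AE_lt_of_rho1: "rho M X x = 1 \<Longrightarrow> AE \<omega> in M. X \<omega> < x"
proof -
  assume "rho M X x = 1"
  then have "AE \<omega> in M. \<omega> \<in> {\<omega> \<in> space M. X \<omega> < x}"
    unfolding rho_def by (intro AE_prob_1)
  then show ?thesis by auto
qed

lemma AE_le_of_rho1:
  assumes "\<And>y. y > u \<Longrightarrow> rho M X y = 1"
  shows "AE \<omega> in M. X \<omega> \<le> u"
proof -
  have "AE \<omega> in M. \<forall>n::nat. X \<omega> < u + 1 / (real n + 1)"
    unfolding AE_all_countable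
  proof
    fix n :: nat
    have "u + 1 / (real n + 1) > u" by simp
    then show "AE \<omega> in M. X \<omega> < u + 1 / (real n + 1)" by (intro AE_lt_of_rho1 assms)
  qed
  then show ?thesis
  proof eventually_elim
    fix \<omega> assume h: "\<forall>n::nat. X \<omega> < u + 1 / (real n + 1)"
    show "X \<omega> \<le> u"
    proof (rule ccontr)
      assume "\<not> X \<omega> \<le> u"
      then have "X \<omega> - u > 0" by simp
      then obtain n :: nat where "1 / (real n + 1) < X \<omega> - u"
        using reals_Archimedean[OF \<open>X \<omega> - u > 0\<close>] by (auto simp: add.commute inverse_eq_divide)
      with h[rule_format, of n] show False by simp
    qed
  qed
qed

lemma rho_left0:
  assumes "\<And>y. y < x \<Longrightarrow> rho M X y = 0"
  shows "rho M X x = 0"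
proof -
  define d where "d n = x - 1 / (real n + 1)" for n :: nat
  have "(\<lambda>n. rho M X (d n)) \<longlonglongrightarrow> rho M X x"
  proof (rule rho_lim_seq)
    show "incseq d" unfolding incseq_def d_def by (auto simp: field_simps)
    show "d n \<le> x" for n unfolding d_def by simp
    fix y assume "y < x"
    then have "x - y > 0" by simp
    then obtain n :: nat where "1 / (real n + 1) < x - y"
      using reals_Archimedean[OF \<open>x - y > 0\<close>] by (auto simp: add.commute inverse_eq_divide)
    then show "\<exists>n. y \<le> d n" unfolding d_def by (intro exI[of _ n]) simp
  qed
  moreover have "rho M X (d n) = 0" for n unfolding d_def by (rule assms) simp
  ultimately show ?thesis using LIMSEQ_unique[OF _ tendsto_const] by simp
qed

lemma xlow_props:
  shows "0 \<le> xlow M X" "rho M X (xlow M X) = 0" "\<And>c. rho M X c = 0 \<Longrightarrow> c \<le> xlow M X"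
proof -
  define T where "T = {x. x \<ge> 0 \<and> rho M X x = 0}"
  obtain B where B: "rho M X B > 0" using rho_eventually_pos by blast
  have bdd: "x \<le> B" if "x \<in> T" for x
  proof (rule ccontr)
    assume "\<not> x \<le> B"
    then have "rho M X B \<le> rho M X x" by (intro rho_mono) simp
    with that B show False unfolding T_def by simp
  qed
  have T0: "0 \<in> T" unfolding T_def using rho_nonpos by simp
  define t where "t = Sup T"
  have bddT: "bdd_above T" using bdd by (intro bdd_aboveI[of T B]) blast
  have t0: "0 \<le> t" unfolding t_def using T0 bddT by (rule cSup_upper)
  have upper: "x \<le> t" if "x \<in> T" for x unfolding t_def using that bddT by (rule cSup_upper)
  have rt: "rho M X t = 0"
  proof (rule rho_left0)
    fix y assume "y < t"
    then obtain x where "x \<in> T" "y < x" unfolding t_def using T0 less_cSupE[of y T] by blast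
    then have "rho M X y \<le> rho M X x" by (intro rho_mono) simp
    with \<open>x \<in> T\<close> rho_nonneg[of y] show "rho M X y = 0" unfolding T_def by simp
  qed
  have eq: "xlow M X = t" unfolding xlow_def
  proof (rule Greatest_equality)
    show "0 \<le> t \<and> rho M X t = 0" using t0 rt by simp
    fix y assume "0 \<le> y \<and> rho M X y = 0"
    then show "y \<le> t" using upper unfolding T_def by simp
  qed
  show "0 \<le> xlow M X" "rho M X (xlow M X) = 0" using eq t0 rt by simp_all
  fix c assume "rho M X c = 0"
  then show "c \<le> xlow M X"
    using upper[of c] t0 eq unfolding T_def by (cases "c \<ge> 0") auto
qed

lemma rho_pos: "xlow M X < c \<Longrightarrow> 0 < rho M X c"
  using xlow_props(3)[of c] rho_nonneg[of c] by force

lemma xlow_le_xup: "ereal (xlow M X) \<le> xup M X"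
  unfolding xup_def
proof (rule Inf_greatest)
  fix z assume "z \<in> ereal ` {x. 0 \<le> x \<and> rho M X x = 1}"
  then obtain x where x: "z = ereal x" "rho M X x = 1" by auto
  have "xlow M X \<le> x"
  proof (rule ccontr)
    assume "\<not> xlow M X \<le> x"
    then have "rho M X x \<le> rho M X (xlow M X)" by (intro rho_mono) simp
    with x xlow_props(2) show False by simp
  qed
  then show "ereal (xlow M X) \<le> z" using x by simp
qed

lemma rho_lt1: "ereal c < xup M X \<Longrightarrow> 0 \<le> c \<Longrightarrow> rho M X c < 1"
proof (rule ccontr)
  assume h: "ereal c < xup M X" "0 \<le> c" "\<not> rho M X c < 1"
  then have "rho M X c = 1" using rho_le1[of c] by simp
  with h have "xup M X \<le> ereal c" unfolding xup_def by (intro Inf_lower) auto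
  with h show False by simp
qed

lemma xup_finite:
  assumes "xup M X \<noteq> \<infinity>"
  shows "xup M X = ereal (real_of_ereal (xup M X))"
proof -
  have "xup M X \<noteq> - \<infinity>" using xlow_le_xup by auto
  with assms show ?thesis by (cases "xup M X") auto
qed

lemma AE_le_xup:
  assumes "xup M X \<noteq> \<infinity>"
  shows "AE \<omega> in M. X \<omega> \<le> real_of_ereal (xup M X)"
proof (rule AE_le_of_rho1)
  fix y assume y: "real_of_ereal (xup M X) < y"
  have "xup M X < ereal y" by (subst xup_finite[OF assms]) (use y in simp)
  then have "Inf (ereal ` {x. 0 \<le> x \<and> rho M X x = 1}) < ereal y"
    unfolding xup_def .
  then obtain x where x: "0 \<le> x" "rho M X x = 1" "ereal x < ereal y"
    by (auto simp: Inf_less_iff)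
  then have "rho M X x \<le> rho M X y" by (intro rho_mono) simp
  with x rho_le1[of y] show "rho M X y = 1" by simp
qed

end


lemma concave_on_min_const:
  assumes "concave_on S g"
  shows "concave_on S (\<lambda>x. min (g x) k)"
  unfolding concave_on_iff
proof (intro conjI ballI allI impI)
  show "convex S" using assms by (rule concave_on_imp_convex)
  fix x y and u v :: real assume h: "x \<in> S" "y \<in> S" "0 \<le> u" "0 \<le> v" "u + v = 1"
  have 1: "u * min (g x) k + v * min (g y) k \<le> u * g x + v * g y"
    using h by (intro add_mono mult_left_mono) auto
  have 2: "u * g x + v * g y \<le> g (u *\<^sub>R x + v *\<^sub>R y)"
    using assms h unfolding concave_on_iff by blast
  have 3: "u * min (g x) k + v * min (g y) k \<le> u * k + v * k"
    using h by (intro add_mono mult_left_mono) auto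
  have 4: "u * k + v * k = k" using h(5) by (metis distrib_right mult_1)
  show "u * min (g x) k + v * min (g y) k \<le> min (g (u *\<^sub>R x + v *\<^sub>R y)) k"
    by (rule min.boundedI) (use 1 2 3 4 in linarith)+
qed

lemma hform_aux:
  fixes p q Y :: real
  assumes "p > 0" "q > 0" "q \<noteq> p"
  shows "1/(2*p) + (Y - p)/(q - p) * (1/(2*q) - 1/(2*p)) = (p + q - Y)/(2*p*q)"
proof -
  have "q - p \<noteq> 0" using assms by simp
  then show ?thesis using assms by (simp add: field_simps)
qed

lemma hdiff_aux:
  fixes p q Y :: real
  assumes "p > 0" "q > 0" "Y > 0"
  shows "(p + q - Y) / (2 * p * q) - 1 / (2 * Y) = (Y - p) * (q - Y) / (2 * p * q * Y)"
  using assms by (simp add: field_simps)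

lemma cancel_aux:
  fixes p q :: real
  assumes "p \<noteq> 0" "q \<noteq> 0"
  shows "p / (2 * p * q) = 1 / (2 * q)"
  using assms by (simp add: field_simps)

context
  fixes M :: "'a measure" and X :: "'a \<Rightarrow> real" and r r' :: "real \<Rightarrow> real"
  assumes P: "prob_space M"
    and Xm[measurable]: "X \<in> borel_measurable M"
    and Xnn: "\<forall>\<omega>\<in>space M. 0 \<le> X \<omega>"
    and rmono: "mono_on {0..} r"
    and rconc: "concave_on {0..} r"
    and rder: "\<forall>x\<ge>0. (r has_real_derivative r' x) (at x within {0..})"
    and rcont: "continuous_on {0..} r'"
begin

interpretation prob_space M by (rule P)

lemmas rd_anti' = rd_anti[OF rmono rconc rder rcont]
lemmas rd_nonneg' = rd_nonneg[OF rmono rconc rder rcont]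
lemmas rho_mono' = rho_mono[OF P Xm Xnn]
lemmas rho_le1' = rho_le1[OF P Xm Xnn]
lemmas rho_nonneg' = rho_nonneg[OF P Xm Xnn]
lemmas rho_big' = rho_big[OF P Xm Xnn]
lemmas AE_ge_of_rho0' = AE_ge_of_rho0[OF P Xm Xnn]
lemmas xlow_props' = xlow_props[OF P Xm Xnn]
lemmas rho_pos' = rho_pos[OF P Xm Xnn]
lemmas xlow_le_xup' = xlow_le_xup[OF P Xm Xnn]
lemmas rho_lt1' = rho_lt1[OF P Xm Xnn]
lemmas xup_finite' = xup_finite[OF P Xm Xnn]
lemmas AE_le_xup' = AE_le_xup[OF P Xm Xnn]

lemma rdX_meas[measurable]: "(\<lambda>\<omega>. r' (X \<omega>)) \<in> borel_measurable M"
proof -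
  have c: "continuous_on UNIV (\<lambda>x. r' (max 0 x))"
    by (rule continuous_on_compose2[OF rcont]) (auto intro: continuous_intros)
  have "(\<lambda>\<omega>. r' (max 0 (X \<omega>))) \<in> borel_measurable M"
    by (rule borel_measurable_continuous_on[OF c Xm])
  then show ?thesis
    by (rule measurable_cong[THEN iffD1, rotated]) (use Xnn in auto)
qed

lemma AE_X_ge_xlow: "AE \<omega> in M. xlow M X \<le> X \<omega>"
  using AE_ge_of_rho0' xlow_props'(2) by blast

lemma integrable_E: "integrable M (\<lambda>\<omega>. r' (X \<omega>) * indicator {..<c} (X \<omega>))"
proof (rule integrable_const_bound[where B="r' 0"])
  show "AE \<omega> in M. norm (r' (X \<omega>) * indicator {..<c} (X \<omega>)) \<le> r' 0"
  proof (rule AE_I2)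
    fix \<omega> assume "\<omega> \<in> space M"
    then have "0 \<le> X \<omega>" using Xnn by auto
    then have "0 \<le> r' (X \<omega>)" "r' (X \<omega>) \<le> r' 0" using rd_nonneg' rd_anti' by auto
    then show "norm (r' (X \<omega>) * indicator {..<c} (X \<omega>)) \<le> r' 0"
      using rd_nonneg'[of 0] by (auto simp: indicator_def)
  qed
qed measurable

lemma integrable_I: "integrable M (\<lambda>\<omega>. indicator {..<c} (X \<omega>) :: real)"
  by (rule integrable_const_bound[where B=1]) (auto simp: indicator_def)

lemma integrable_XI: "integrable M (\<lambda>\<omega>. X \<omega> * indicator {..<c} (X \<omega>))"
proof (rule integrable_const_bound[where B="\<bar>c\<bar>"])
  show "AE \<omega> in M. norm (X \<omega> * indicator {..<c} (X \<omega>)) \<le> \<bar>c\<bar>"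
    using Xnn by (intro AE_I2) (auto simp: indicator_def)
qed measurable

lemma int_I: "(\<integral>\<omega>. indicator {..<c} (X \<omega>) \<partial>M) = rho M X c"
proof -
  have "(\<integral>\<omega>. indicator {..<c} (X \<omega>) \<partial>M) = (\<integral>\<omega>. indicator {\<omega> \<in> space M. X \<omega> < c} \<omega> \<partial>M)"
    by (rule Bochner_Integration.integral_cong) (auto simp: indicator_def)
  also have "\<dots> = rho M X c" unfolding rho_def by simp
  finally show ?thesis .
qed

lemma E_mono: "c \<le> d \<Longrightarrow> (\<integral>\<omega>. r' (X \<omega>) * indicator {..<c} (X \<omega>) \<partial>M) \<le> (\<integral>\<omega>. r' (X \<omega>) * indicator {..<d} (X \<omega>) \<partial>M)"
proof -
  assume "c \<le> d"
  show ?thesis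
  proof (rule integral_mono[OF integrable_E integrable_E])
    fix \<omega> assume "\<omega> \<in> space M"
    then have "0 \<le> r' (X \<omega>)" using Xnn rd_nonneg' by auto
    then show "r' (X \<omega>) * indicator {..<c} (X \<omega>) \<le> r' (X \<omega>) * indicator {..<d} (X \<omega>)"
      using \<open>c \<le> d\<close> by (auto simp: indicator_def)
  qed
qed

lemma S1_lower:
  "xlow M X * rho M X c \<le> (\<integral>\<omega>. X \<omega> * indicator {..<c} (X \<omega>) \<partial>M)"
proof -
  have "xlow M X * rho M X c = (\<integral>\<omega>. xlow M X * indicator {..<c} (X \<omega>) \<partial>M)"
    by (simp add: int_I)
  also have "\<dots> \<le> (\<integral>\<omega>. X \<omega> * indicator {..<c} (X \<omega>) \<partial>M)"
  proof (rule integral_mono_AE)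
    show "integrable M (\<lambda>\<omega>. xlow M X * indicator {..<c} (X \<omega>))"
      using integrable_I by simp
    show "integrable M (\<lambda>\<omega>. X \<omega> * indicator {..<c} (X \<omega>))" by (rule integrable_XI)
    show "AE \<omega> in M. xlow M X * indicator {..<c} (X \<omega>) \<le> X \<omega> * indicator {..<c} (X \<omega>)"
      using AE_X_ge_xlow by eventually_elim (auto simp: indicator_def)
  qed
  finally show ?thesis .
qed

lemma S1_upper:
  assumes "xlow M X < c"
  shows "(\<integral>\<omega>. X \<omega> * indicator {..<c} (X \<omega>) \<partial>M) < c * rho M X c"
proof -
  define f where "f \<omega> = (c - X \<omega>) * indicator {..<c} (X \<omega>)" for \<omega>
  have fi: "integrable M f" unfolding f_def left_diff_distrib
    using integrable_XI integrable_I by (intro Bochner_Integration.integrable_diff) auto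
  have fnn: "AE \<omega> in M. 0 \<le> f \<omega>" unfolding f_def by (intro AE_I2) (auto simp: indicator_def)
  have fint: "integral\<^sup>L M f = c * rho M X c - (\<integral>\<omega>. X \<omega> * indicator {..<c} (X \<omega>) \<partial>M)"
    unfolding f_def left_diff_distrib
    by (subst Bochner_Integration.integral_diff) (use integrable_XI integrable_I int_I in auto)
  have "integral\<^sup>L M f \<noteq> 0"
  proof
    assume "integral\<^sup>L M f = 0"
    then have "AE \<omega> in M. f \<omega> = 0" using integral_nonneg_eq_0_iff_AE[OF fi fnn] by simp
    then have "AE \<omega> in M. \<not> X \<omega> < c" by eventually_elim (auto simp: f_def indicator_def)
    then have "emeasure M {\<omega> \<in> space M. X \<omega> < c} = 0"
      by (subst (asm) AE_iff_measurable[OF sets_less[OF P Xm Xnn]]) auto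
    then have "rho M X c = 0" unfolding rho_def by (simp add: emeasure_eq_measure)
    with rho_pos'[OF assms] show False by simp
  qed
  moreover have "0 \<le> integral\<^sup>L M f" using fnn by (rule integral_nonneg_AE)
  ultimately show ?thesis using fint by simp
qed

lemma xi_facts:
  assumes "xlow M X < c" "ereal c < xup M X"
  shows "xlow M X \<le> xi M X c" "xi M X c * rho M X c \<le> (\<integral>\<omega>. X \<omega> * indicator {..<c} (X \<omega>) \<partial>M)"
    "xi M X c < c"
proof -
  have rp: "0 < rho M X c" using rho_pos'[OF assms(1)] .
  show 1: "xlow M X \<le> xi M X c" unfolding xi_def by auto
  show 2: "xi M X c * rho M X c \<le> (\<integral>\<omega>. X \<omega> * indicator {..<c} (X \<omega>) \<partial>M)"
  proof (cases "xup M X = \<infinity>")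
    case True
    then show ?thesis unfolding xi_def using S1_lower by simp
  next
    case False
    define u where "u = real_of_ereal (xup M X)"
    define S1 where "S1 = (\<integral>\<omega>. X \<omega> * indicator {..<c} (X \<omega>) \<partial>M)"
    define \<rho> where "\<rho> = rho M X c"
    have aeu: "AE \<omega> in M. X \<omega> \<le> u" using AE_le_xup'[OF False] unfolding u_def .
    have Xi: "integrable M X"
    proof (rule integrable_const_bound[where B="u"])
      show "AE \<omega> in M. norm (X \<omega>) \<le> u" using aeu Xnn by (auto elim!: eventually_mono)
    qed measurable
    have "(\<integral>\<omega>. X \<omega> * (1 - indicator {..<c} (X \<omega>)) \<partial>M) \<le> (\<integral>\<omega>. u * (1 - indicator {..<c} (X \<omega>)) \<partial>M)"
    proof (rule integral_mono_AE)
      show "integrable M (\<lambda>\<omega>. X \<omega> * (1 - indicator {..<c} (X \<omega>)))"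
        unfolding right_diff_distrib using Xi integrable_XI by (intro Bochner_Integration.integrable_diff) auto
      show "integrable M (\<lambda>\<omega>. u * (1 - indicator {..<c} (X \<omega>)))"
        using integrable_I by (intro integrable_mult_right Bochner_Integration.integrable_diff) auto
      show "AE \<omega> in M. X \<omega> * (1 - indicator {..<c} (X \<omega>)) \<le> u * (1 - indicator {..<c} (X \<omega>))"
        using aeu by eventually_elim (auto simp: indicator_def)
    qed
    moreover have "(\<integral>\<omega>. X \<omega> * (1 - indicator {..<c} (X \<omega>)) \<partial>M) = mu M X - S1"
      unfolding right_diff_distrib mu_def S1_def
      by (subst Bochner_Integration.integral_diff) (use Xi integrable_XI in auto)
    moreover have "(\<integral>\<omega>. u * (1 - indicator {..<c} (X \<omega>)) \<partial>M) = u * (1 - \<rho>)"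
    proof -
      have e1: "(\<integral>\<omega>. (1 - indicator {..<c} (X \<omega>)) \<partial>M) = 1 - \<rho>"
        unfolding \<rho>_def using integrable_I int_I
        by (subst Bochner_Integration.integral_diff) (auto simp: prob_space)
      show ?thesis by (simp only: Bochner_Integration.integral_mult_right_zero e1)
    qed
    ultimately have "mu M X - S1 \<le> u * (1 - \<rho>)" by linarith
    then have "(mu M X - (1 - \<rho>) * u) / \<rho> * \<rho> \<le> S1"
    proof -
      have "(mu M X - (1 - \<rho>) * u) / \<rho> * \<rho> = mu M X - (1 - \<rho>) * u"
        using rp unfolding \<rho>_def by simp
      with \<open>mu M X - S1 \<le> u * (1 - \<rho>)\<close> show ?thesis by (simp add: algebra_simps)
    qed
    moreover have "xlow M X * \<rho> \<le> S1" using S1_lower unfolding \<rho>_def S1_def .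
    ultimately show ?thesis
      using False unfolding xi_def S1_def[symmetric] \<rho>_def[symmetric] u_def[symmetric]
      by (auto simp: max_def)
  qed
  have "xi M X c * rho M X c < c * rho M X c" using 2 S1_upper[OF assms(1)] by simp
  then show "xi M X c < c" using rp by simp
qed

lemma key:
  assumes ac: "xlow M X < c" "ereal c < xup M X"
    and gc: "concave_on {xlow M X..c} g" and gm: "\<forall>y\<in>{xlow M X..c}. r' y \<le> g y"
  shows "(\<integral>\<omega>. r' (X \<omega>) * indicator {..<c} (X \<omega>) \<partial>M) \<le> rho M X c * g (xi M X c)"
proof -
  define a where "a = xlow M X"
  define \<rho> where "\<rho> = rho M X c"
  define S1 where "S1 = (\<integral>\<omega>. X \<omega> * indicator {..<c} (X \<omega>) \<partial>M)"
  define m where "m = S1 / \<rho>"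
  define \<xi> where "\<xi> = xi M X c"
  define E where "E = (\<integral>\<omega>. r' (X \<omega>) * indicator {..<c} (X \<omega>) \<partial>M)"
  have a0: "0 \<le> a" unfolding a_def using xlow_props' by simp
  have rp: "0 < \<rho>" unfolding \<rho>_def a_def using rho_pos'[OF ac(1)] .
  have ac': "a < c" using ac unfolding a_def by simp
  have S1m: "S1 = m * \<rho>" unfolding m_def using rp by simp
  have am: "a \<le> m"
  proof -
    have "a * \<rho> \<le> m * \<rho>" using S1_lower[of c] unfolding S1_def[symmetric] S1m a_def \<rho>_def .
    then show ?thesis using rp by simp
  qed
  have mc: "m < c" using S1_upper[OF ac(1)] rp unfolding S1_def[symmetric] S1m \<rho>_def[symmetric] by simp
  have xim: "\<xi> \<le> m" using xi_facts(2)[OF ac] rp unfolding S1_def[symmetric] S1m \<rho>_def[symmetric] \<xi>_def by simp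
  have axi: "a \<le> \<xi>" using xi_facts(1)[OF ac] unfolding a_def \<xi>_def .
  define G where "G y = min (g y) (r' a)" for y
  have Gc: "concave_on {a..c} G"
    unfolding G_def using gc unfolding a_def by (rule concave_on_min_const)
  have Ga: "G a = r' a" unfolding G_def using gm ac' unfolding a_def by auto
  have Gle: "G y \<le> r' a" for y unfolding G_def by simp
  have rG: "r' y \<le> G y" if "y \<in> {a..c}" for y
    unfolding G_def using gm that rd_anti'[of a y] a0 unfolding a_def by auto
  have aeX: "AE \<omega> in M. a \<le> X \<omega>" unfolding a_def by (rule AE_X_ge_xlow)
  have EGm: "E \<le> \<rho> * G m"
  proof (cases "m = a")
    case True
    have "E \<le> (\<integral>\<omega>. r' a * indicator {..<c} (X \<omega>) \<partial>M)"
      unfolding E_def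
    proof (rule integral_mono_AE[OF integrable_E])
      show "integrable M (\<lambda>\<omega>. r' a * indicator {..<c} (X \<omega>))" using integrable_I by simp
      show "AE \<omega> in M. r' (X \<omega>) * indicator {..<c} (X \<omega>) \<le> r' a * indicator {..<c} (X \<omega>)"
        using aeX by eventually_elim (use rd_anti' a0 in \<open>auto simp: indicator_def\<close>)
    qed
    also have "\<dots> = r' a * \<rho>" unfolding \<rho>_def by (simp add: int_I)
    finally show ?thesis using True Ga by (simp add: mult.commute)
  next
    case False
    with am have am': "a < m" by simp
    have cv: "convex_on {a..c} (\<lambda>x. - G x)" using Gc by (simp add: concave_on_def)
    have mint: "m \<in> interior {a..c}" using am' mc by simp
    define s where "s = Inf ((\<lambda>t. ((- G m) - (- G t)) / (m - t)) ` ({m<..} \<inter> {a..c}))"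
    have sup: "G y \<le> G m - s * (y - m)" if "y \<in> {a..c}" for y
      using convex_le_Inf_differential[OF cv mint that] unfolding s_def by simp
    have "E \<le> (\<integral>\<omega>. (G m + s * m) * indicator {..<c} (X \<omega>) - s * (X \<omega> * indicator {..<c} (X \<omega>)) \<partial>M)"
      unfolding E_def
    proof (rule integral_mono_AE[OF integrable_E])
      show "integrable M (\<lambda>\<omega>. (G m + s * m) * indicator {..<c} (X \<omega>) - s * (X \<omega> * indicator {..<c} (X \<omega>)))"
        using integrable_I integrable_XI by (intro Bochner_Integration.integrable_diff integrable_mult_right) auto
      show "AE \<omega> in M. r' (X \<omega>) * indicator {..<c} (X \<omega>) \<le> (G m + s * m) * indicator {..<c} (X \<omega>) - s * (X \<omega> * indicator {..<c} (X \<omega>))"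
        using aeX
      proof eventually_elim
        fix \<omega> assume h: "a \<le> X \<omega>"
        show "r' (X \<omega>) * indicator {..<c} (X \<omega>) \<le> (G m + s * m) * indicator {..<c} (X \<omega>) - s * (X \<omega> * indicator {..<c} (X \<omega>))"
        proof (cases "X \<omega> < c")
          case True
          then have "X \<omega> \<in> {a..c}" using h by simp
          then have "r' (X \<omega>) \<le> G m - s * (X \<omega> - m)" using rG sup by (meson order_trans)
          then show ?thesis using True by (simp add: indicator_def algebra_simps)
        qed (simp add: indicator_def)
      qed
    qed
    also have "\<dots> = (G m + s * m) * \<rho> - s * S1"
      unfolding \<rho>_def S1_def using integrable_I integrable_XI
      by (subst Bochner_Integration.integral_diff) (auto simp: int_I)
    also have "\<dots> = \<rho> * G m" unfolding S1m by (simp add: algebra_simps)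
    finally show ?thesis .
  qed
  have GmGxi: "G m \<le> G \<xi>"
  proof (cases "\<xi> = m")
    case False
    with xim have xm: "\<xi> < m" by simp
    define t where "t = (\<xi> - a) / (m - a)"
    have t0: "0 \<le> t" "t \<le> 1" unfolding t_def using axi xm by (auto simp: field_simps)
    have xt: "(1 - t) *\<^sub>R a + t *\<^sub>R m = \<xi>"
    proof -
      have "t * (m - a) = \<xi> - a" unfolding t_def using xm axi by simp
      then show ?thesis by (simp add: algebra_simps)
    qed
    have "(1 - t) * G a + t * G m \<le> G ((1 - t) *\<^sub>R a + t *\<^sub>R m)"
      by (rule concave_onD[OF Gc t0]) (use ac' am mc in auto)
    moreover have "G m \<le> (1 - t) * G a + t * G m"
    proof -
      have "G m \<le> G a" using Gle Ga by simp
      then have "(1 - t) * G m \<le> (1 - t) * G a" using t0 by (intro mult_left_mono) auto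
      then show ?thesis by (simp add: algebra_simps)
    qed
    ultimately show ?thesis using xt by simp
  qed simp
  have "G \<xi> \<le> g \<xi>" unfolding G_def by simp
  then have "\<rho> * G m \<le> \<rho> * g \<xi>" using GmGxi rp by (intro mult_left_mono) auto
  with EGm show ?thesis unfolding E_def \<rho>_def \<xi>_def by simp
qed

lemma E_le_env:
  assumes ac: "xlow M X < c" "ereal c < xup M X"
  shows "(\<integral>\<omega>. r' (X \<omega>) * indicator {..<c} (X \<omega>) \<partial>M) \<le> rho M X c * concave_env r' (xlow M X) c (xi M X c)"
    and "concave_env r' (xlow M X) c (xi M X c) \<le> r' (xlow M X)"
proof -
  define a where "a = xlow M X"
  define Gs where "Gs = {g (xi M X c) | g. concave_on {a..c} g \<and> (\<forall>y\<in>{a..c}. r' y \<le> g y)}"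
  have a0: "0 \<le> a" unfolding a_def using xlow_props' by simp
  have rp: "0 < rho M X c" using rho_pos'[OF ac(1)] .
  have cst: "r' a \<in> Gs" unfolding Gs_def
    using rd_anti' a0 by (auto intro!: exI[of _ "\<lambda>_. r' a"] simp: concave_on_const)
  have xr: "a \<le> xi M X c" "xi M X c \<le> c" using xi_facts[OF ac] unfolding a_def by auto
  have bdd: "bdd_below Gs" unfolding Gs_def using xr
    by (intro bdd_belowI[where m="r' (xi M X c)"]) auto
  have env: "concave_env r' a c (xi M X c) = Inf Gs" unfolding concave_env_def Gs_def ..
  show "concave_env r' (xlow M X) c (xi M X c) \<le> r' (xlow M X)"
    using cInf_lower[OF cst bdd] env unfolding a_def by simp
  have "(\<integral>\<omega>. r' (X \<omega>) * indicator {..<c} (X \<omega>) \<partial>M) / rho M X c \<le> Inf Gs"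
  proof (rule cInf_greatest)
    show "Gs \<noteq> {}" using cst by auto
    fix z assume "z \<in> Gs"
    then obtain g where g: "z = g (xi M X c)" "concave_on {a..c} g" "\<forall>y\<in>{a..c}. r' y \<le> g y"
      unfolding Gs_def by auto
    have "(\<integral>\<omega>. r' (X \<omega>) * indicator {..<c} (X \<omega>) \<partial>M) \<le> rho M X c * g (xi M X c)"
      by (rule key[OF ac]) (use g in \<open>auto simp: a_def\<close>)
    then show "(\<integral>\<omega>. r' (X \<omega>) * indicator {..<c} (X \<omega>) \<partial>M) / rho M X c \<le> z"
      using rp g(1) by (simp add: divide_simps mult.commute)
  qed
  then show "(\<integral>\<omega>. r' (X \<omega>) * indicator {..<c} (X \<omega>) \<partial>M) \<le> rho M X c * concave_env r' (xlow M X) c (xi M X c)"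
    using rp env unfolding a_def by (simp add: divide_simps mult.commute)
qed

lemma cont_right:
  assumes "0 \<le> x0" "y < r' x0" "x0 < b"
  shows "\<exists>x. x0 < x \<and> x < b \<and> y < r' x"
proof -
  have "(r' \<longlongrightarrow> r' x0) (at x0 within {0..})"
    using rcont assms(1) by (simp add: continuous_on_def)
  then have "(r' \<longlongrightarrow> r' x0) (at_right x0)"
    by (rule tendsto_within_subset) (use assms(1) in auto)
  then have "eventually (\<lambda>x. y < r' x) (at_right x0)"
    using assms(2) by (rule order_tendstoD)
  moreover have "eventually (\<lambda>x. x \<in> {x0<..<b}) (at_right x0)"
    using eventually_at_right_real[OF assms(3)] .
  ultimately have "eventually (\<lambda>x. y < r' x \<and> x \<in> {x0<..<b}) (at_right x0)"
    by (rule eventually_conj)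
  from eventually_happens'[OF _ this] show ?thesis by auto
qed

lemma deriv_inf:
  assumes "xup M X = \<infinity>"
  shows "(r' \<longlongrightarrow> deriv_at_xup M X r') at_top" "\<And>x. 0 \<le> x \<Longrightarrow> deriv_at_xup M X r' \<le> r' x"
    "0 \<le> deriv_at_xup M X r'"
proof -
  define L where "L = Inf (r' ` {0..})"
  have bdd: "bdd_below (r' ` {0..})" using rd_nonneg' by (intro bdd_belowI[where m=0]) auto
  have Lle: "L \<le> r' x" if "0 \<le> x" for x unfolding L_def using that bdd by (intro cInf_lower) auto
  have L0: "0 \<le> L" unfolding L_def using rd_nonneg' by (intro cInf_greatest) auto
  have lim: "(r' \<longlongrightarrow> L) at_top"
  proof (rule order_tendstoI)
    fix y assume "y < L"
    then show "eventually (\<lambda>x. y < r' x) at_top"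
      unfolding eventually_at_top_linorder using Lle by (intro exI[of _ 0]) (auto intro: less_le_trans)
  next
    fix y assume "L < y"
    then obtain z where z: "z \<in> r' ` {0..}" "z < y" unfolding L_def
      using cInf_less_iff[OF _ bdd] by auto
    then obtain x0 where x0: "0 \<le> x0" "r' x0 < y" by auto
    show "eventually (\<lambda>x. r' x < y) at_top"
      unfolding eventually_at_top_linorder using x0 rd_anti'
      by (intro exI[of _ x0]) (auto intro: le_less_trans)
  qed
  have eq: "deriv_at_xup M X r' = L" unfolding deriv_at_xup_def using assms lim
    by (simp add: tendsto_Lim)
  show "(r' \<longlongrightarrow> deriv_at_xup M X r') at_top" using lim eq by simp
  show "\<And>x. 0 \<le> x \<Longrightarrow> deriv_at_xup M X r' \<le> r' x" using Lle eq by simp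
  show "0 \<le> deriv_at_xup M X r'" using L0 eq by simp
qed

lemma finite_case:
  assumes H: "r' (xlow M X) > deriv_at_xup M X r'" and fin: "xup M X \<noteq> \<infinity>"
  shows "xlow M X < real_of_ereal (xup M X)" "deriv_at_xup M X r' = r' (real_of_ereal (xup M X))"
proof -
  define u where "u = real_of_ereal (xup M X)"
  have U: "xup M X = ereal u" unfolding u_def using xup_finite'[OF fin] .
  show L: "deriv_at_xup M X r' = r' (real_of_ereal (xup M X))" unfolding deriv_at_xup_def using fin by simp
  have "xlow M X \<le> u" using xlow_le_xup' U by simp
  moreover have "xlow M X \<noteq> u" using H L unfolding u_def by auto
  ultimately show "xlow M X < real_of_ereal (xup M X)" unfolding u_def by simp
qed

lemma L_nonneg:
  assumes H: "r' (xlow M X) > deriv_at_xup M X r'"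
  shows "0 \<le> deriv_at_xup M X r'"
proof (cases "xup M X = \<infinity>")
  case True then show ?thesis using deriv_inf by simp
next
  case False
  have "0 \<le> xlow M X" using xlow_props' by simp
  then show ?thesis using finite_case[OF H False] rd_nonneg'[of "real_of_ereal (xup M X)"] by simp
qed

lemma E_bounded:
  assumes H: "r' (xlow M X) > deriv_at_xup M X r'"
  shows "\<exists>B. \<forall>c\<ge>B. r' c < (\<integral>\<omega>. r' (X \<omega>) * indicator {..<c} (X \<omega>) \<partial>M)"
proof -
  define a where "a = xlow M X"
  define L where "L = deriv_at_xup M X r'"
  have a0: "0 \<le> a" unfolding a_def using xlow_props' by simp
  have aL: "L < r' a" using H unfolding a_def L_def .
  have L0: "0 \<le> L" using L_nonneg[OF H] unfolding L_def .
  show ?thesis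
  proof (cases "xup M X = \<infinity>")
    case False
    define u where "u = real_of_ereal (xup M X)"
    have au: "a < u" and Lu: "L = r' u" using finite_case[OF H False] unfolding a_def u_def L_def by auto
    obtain c1 where c1: "a < c1" "c1 < u" "L < r' c1" using cont_right[OF a0 aL au] by auto
    define \<delta> where "\<delta> = r' c1 - L"
    define p where "p = rho M X c1"
    have dp: "0 < \<delta>" "0 < p" unfolding \<delta>_def p_def using c1 rho_pos'[of c1] unfolding a_def by auto
    have aeu: "AE \<omega> in M. X \<omega> \<le> u" using AE_le_xup'[OF False] unfolding u_def .
    show ?thesis
    proof (intro exI[of _ "u + 1"] allI impI)
      fix c assume c: "u + 1 \<le> c"
      have "L + \<delta> * p = (\<integral>\<omega>. L + \<delta> * indicator {..<c1} (X \<omega>) \<partial>M)"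
        using integrable_I by (simp add: int_I p_def prob_space)
      also have "\<dots> \<le> (\<integral>\<omega>. r' (X \<omega>) * indicator {..<c} (X \<omega>) \<partial>M)"
      proof (rule integral_mono_AE[OF _ integrable_E])
        show "integrable M (\<lambda>\<omega>. L + \<delta> * indicator {..<c1} (X \<omega>))"
          using integrable_I by (intro Bochner_Integration.integrable_add) auto
        show "AE \<omega> in M. L + \<delta> * indicator {..<c1} (X \<omega>) \<le> r' (X \<omega>) * indicator {..<c} (X \<omega>)"
          using aeu AE_X_ge_xlow
        proof eventually_elim
          fix \<omega> assume h: "X \<omega> \<le> u" "xlow M X \<le> X \<omega>"
          then have x0: "0 \<le> X \<omega>" using a0 unfolding a_def by simp
          have "r' u \<le> r' (X \<omega>)" using rd_anti' x0 h by simp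
          moreover have "X \<omega> < c1 \<Longrightarrow> r' c1 \<le> r' (X \<omega>)" using rd_anti' x0 by simp
          moreover have "X \<omega> < c" using h c by simp
          ultimately show "L + \<delta> * indicator {..<c1} (X \<omega>) \<le> r' (X \<omega>) * indicator {..<c} (X \<omega>)"
            unfolding \<delta>_def Lu by (auto simp: indicator_def)
        qed
      qed
      finally have "L + \<delta> * p \<le> (\<integral>\<omega>. r' (X \<omega>) * indicator {..<c} (X \<omega>) \<partial>M)" .
      moreover have "r' c \<le> L" unfolding Lu using rd_anti'[of u c] c au a0 by simp
      moreover have "0 < \<delta> * p" using dp by simp
      ultimately show "r' c < (\<integral>\<omega>. r' (X \<omega>) * indicator {..<c} (X \<omega>) \<partial>M)" by linarith
    qed
  next
    case True
    note inf = deriv_inf[OF True, folded L_def]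
    obtain c1 where c1: "a < c1" "c1 < a + 1" "L < r' c1" using cont_right[OF a0 aL, of "a+1"] by auto
    define \<delta> where "\<delta> = r' c1 - L"
    define p where "p = rho M X c1"
    have dp: "0 < \<delta>" "0 < p" unfolding \<delta>_def p_def using c1 rho_pos'[of c1] unfolding a_def by auto
    define \<eta> where "\<eta> = \<delta> * p / 2"
    have eta: "0 < \<eta>" unfolding \<eta>_def using dp by simp
    define e where "e = \<eta> / (L + 1)"
    have e0: "0 < e" unfolding e_def using eta L0 by simp
    have Le: "L * e \<le> \<eta>" unfolding e_def using eta L0 by (simp add: field_simps)
    obtain B1 where B1: "\<forall>c\<ge>B1. rho M X c > 1 - e" using rho_big'[OF e0] by auto
    have "eventually (\<lambda>x. r' x < L + \<eta>) at_top" using inf(1) by (rule order_tendstoD) (use eta in simp)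
    then obtain B2 where B2: "\<forall>x\<ge>B2. r' x < L + \<eta>" unfolding eventually_at_top_linorder by auto
    show ?thesis
    proof (intro exI[of _ "max (max B1 B2) c1"] allI impI)
      fix c assume c: "max (max B1 B2) c1 \<le> c"
      have "L * rho M X c + \<delta> * p = (\<integral>\<omega>. L * indicator {..<c} (X \<omega>) + \<delta> * indicator {..<c1} (X \<omega>) \<partial>M)"
        using integrable_I by (simp add: int_I p_def)
      also have "\<dots> \<le> (\<integral>\<omega>. r' (X \<omega>) * indicator {..<c} (X \<omega>) \<partial>M)"
      proof (rule integral_mono[OF _ integrable_E])
        show "integrable M (\<lambda>\<omega>. L * indicator {..<c} (X \<omega>) + \<delta> * indicator {..<c1} (X \<omega>))"
          using integrable_I by (intro Bochner_Integration.integrable_add) auto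
        fix \<omega> assume "\<omega> \<in> space M"
        then have x0: "0 \<le> X \<omega>" using Xnn by simp
        have "L \<le> r' (X \<omega>)" using inf(2) x0 by simp
        moreover have "X \<omega> < c1 \<Longrightarrow> r' c1 \<le> r' (X \<omega>)" using rd_anti' x0 by simp
        moreover have "c1 \<le> c" using c by simp
        ultimately show "L * indicator {..<c} (X \<omega>) + \<delta> * indicator {..<c1} (X \<omega>) \<le> r' (X \<omega>) * indicator {..<c} (X \<omega>)"
          unfolding \<delta>_def by (auto simp: indicator_def)
      qed
      finally have 1: "L * rho M X c + \<delta> * p \<le> (\<integral>\<omega>. r' (X \<omega>) * indicator {..<c} (X \<omega>) \<partial>M)" .
      have "1 - e < rho M X c" using B1 c by simp
      then have "L * (1 - e) \<le> L * rho M X c" using L0 by (intro mult_left_mono) auto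
      then have 2: "L - \<eta> \<le> L * rho M X c" using Le by (simp add: algebra_simps)
      have 3: "r' c < L + \<eta>" using B2 c by simp
      have 4: "\<delta> * p = 2 * \<eta>" unfolding \<eta>_def by simp
      show "r' c < (\<integral>\<omega>. r' (X \<omega>) * indicator {..<c} (X \<omega>) \<partial>M)" using 1 2 3 4 by linarith
    qed
  qed
qed

lemma E_zero: "(\<integral>\<omega>. r' (X \<omega>) * indicator {..<0} (X \<omega>) \<partial>M) = 0"
proof -
  have "(\<integral>\<omega>. r' (X \<omega>) * indicator {..<0} (X \<omega>) \<partial>M) = (\<integral>\<omega>. 0 \<partial>M)"
    by (rule Bochner_Integration.integral_cong) (use Xnn in \<open>auto simp: indicator_def\<close>)
  then show ?thesis by simp
qed

lemma E_left_lim: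
  assumes "incseq d" "d \<longlonglongrightarrow> s" "\<And>n. d n < s"
  shows "(\<lambda>n. (\<integral>\<omega>. r' (X \<omega>) * indicator {..<d n} (X \<omega>) \<partial>M)) \<longlonglongrightarrow> (\<integral>\<omega>. r' (X \<omega>) * indicator {..<s} (X \<omega>) \<partial>M)"
proof (rule integral_dominated_convergence[where w="\<lambda>_. r' 0"])
  show "integrable M (\<lambda>_. r' 0)" by simp
  show "(\<lambda>\<omega>. r' (X \<omega>) * indicator {..<s} (X \<omega>)) \<in> borel_measurable M" by measurable
  show "(\<lambda>\<omega>. r' (X \<omega>) * indicator {..<d n} (X \<omega>)) \<in> borel_measurable M" for n by measurable
  show "AE \<omega> in M. norm (r' (X \<omega>) * indicator {..<d n} (X \<omega>)) \<le> r' 0" for n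
  proof (rule AE_I2)
    fix \<omega> assume "\<omega> \<in> space M"
    then have "0 \<le> X \<omega>" using Xnn by auto
    then have "0 \<le> r' (X \<omega>)" "r' (X \<omega>) \<le> r' 0" using rd_nonneg' rd_anti' by auto
    then show "norm (r' (X \<omega>) * indicator {..<d n} (X \<omega>)) \<le> r' 0"
      using rd_nonneg'[of 0] by (auto simp: indicator_def)
  qed
  show "AE \<omega> in M. (\<lambda>n. r' (X \<omega>) * indicator {..<d n} (X \<omega>)) \<longlonglongrightarrow> r' (X \<omega>) * indicator {..<s} (X \<omega>)"
  proof (rule AE_I2)
    fix \<omega> assume "\<omega> \<in> space M"
    show "(\<lambda>n. r' (X \<omega>) * indicator {..<d n} (X \<omega>)) \<longlonglongrightarrow> r' (X \<omega>) * indicator {..<s} (X \<omega>)"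
    proof (cases "X \<omega> < s")
      case True
      have "eventually (\<lambda>n. X \<omega> < d n) sequentially" using assms(2) True by (rule order_tendstoD)
      then have "eventually (\<lambda>n. r' (X \<omega>) * indicator {..<d n} (X \<omega>) = r' (X \<omega>) * indicator {..<s} (X \<omega>)) sequentially"
        by eventually_elim (use True in \<open>auto simp: indicator_def\<close>)
      then show ?thesis by (rule tendsto_eventually)
    next
      case False
      then have "\<And>n. \<not> X \<omega> < d n" using assms(3) by (meson less_trans not_less)
      then show ?thesis using False by (simp add: indicator_def)
    qed
  qed
qed

lemma cstar_ge:
  assumes H: "r' (xlow M X) > deriv_at_xup M X r'"
    and c: "0 \<le> c" "(\<integral>\<omega>. r' (X \<omega>) * indicator {..<c} (X \<omega>) \<partial>M) \<le> r' c"
  shows "c \<le> cstar M X r'"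
proof -
  define E where "E c = (\<integral>\<omega>. r' (X \<omega>) * indicator {..<c} (X \<omega>) \<partial>M)" for c
  define S where "S = {c. c \<ge> 0 \<and> E c \<le> r' c}"
  obtain B where B: "\<forall>c\<ge>B. r' c < E c" using E_bounded[OF H] unfolding E_def by auto
  have bdd: "x \<le> B" if "x \<in> S" for x
  proof (rule ccontr)
    assume "\<not> x \<le> B"
    then have "r' x < E x" using B by simp
    with that show False unfolding S_def by simp
  qed
  have bddS: "bdd_above S" using bdd by (intro bdd_aboveI[of S B]) blast
  have S0: "0 \<in> S" unfolding S_def E_def using E_zero rd_nonneg'[of 0] by simp
  define s where "s = Sup S"
  have upper: "x \<le> s" if "x \<in> S" for x unfolding s_def using that bddS by (rule cSup_upper)
  have s0: "0 \<le> s" using upper S0 by simp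
  have sS: "s \<in> S"
  proof -
    define d where "d n = s + - inverse (real (Suc n))" for n
    have dlt: "d n < s" for n unfolding d_def by simp
    have dlim: "d \<longlonglongrightarrow> s" unfolding d_def by (rule LIMSEQ_inverse_real_of_nat_add_minus)
    have dinc: "incseq d" unfolding d_def incseq_def
      by (auto intro!: le_imp_inverse_le)
    have "\<forall>n. \<exists>x. x \<in> S \<and> d n < x \<and> x \<le> s"
    proof
      fix n
      obtain x where "x \<in> S" "d n < x" using less_cSupE[of "d n" S] dlt S0 unfolding s_def by blast
      then show "\<exists>x. x \<in> S \<and> d n < x \<and> x \<le> s" using upper by blast
    qed
    then obtain cs where cs: "\<And>n. cs n \<in> S" "\<And>n. d n < cs n" "\<And>n. cs n \<le> s" by metis
    have cslim: "cs \<longlonglongrightarrow> s"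
      by (rule tendsto_sandwich[OF _ _ dlim tendsto_const]) (use cs in \<open>auto intro!: always_eventually less_imp_le\<close>)
    have rlim: "(\<lambda>n. r' (cs n)) \<longlonglongrightarrow> r' s"
      by (rule continuous_on_tendsto_compose[OF rcont cslim]) (use s0 cs(1) in \<open>auto simp: S_def\<close>)
    have Elim: "(\<lambda>n. E (d n)) \<longlonglongrightarrow> E s" unfolding E_def by (rule E_left_lim[OF dinc dlim dlt])
    have "E (d n) \<le> r' (cs n)" for n
    proof -
      have "E (d n) \<le> E (cs n)" unfolding E_def using cs(2)[of n] by (intro E_mono) simp
      also have "\<dots> \<le> r' (cs n)" using cs(1)[of n] unfolding S_def by simp
      finally show ?thesis .
    qed
    then have "E s \<le> r' s" by (intro LIMSEQ_le[OF Elim rlim]) auto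
    then show ?thesis unfolding S_def using s0 by simp
  qed
  have eq: "cstar M X r' = s" unfolding cstar_def
  proof (rule Greatest_equality)
    show "0 \<le> s \<and> (\<integral>\<omega>. r' (X \<omega>) * indicator {..<s} (X \<omega>) \<partial>M) \<le> r' s" using sS unfolding S_def E_def by simp
    fix y assume "0 \<le> y \<and> (\<integral>\<omega>. r' (X \<omega>) * indicator {..<y} (X \<omega>) \<partial>M) \<le> r' y"
    then show "y \<le> s" using upper unfolding S_def E_def by simp
  qed
  show ?thesis using upper[of c] c eq unfolding S_def E_def by simp
qed

lemma part1:
  assumes H: "r' (xlow M X) > deriv_at_xup M X r'"
  shows "clow M X r' \<le> cstar M X r'"
proof -
  define a where "a = xlow M X"
  define C where "C = {c. xlow M X < c \<and> ereal c < xup M X \<and>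
      r' c \<ge> rho M X c * concave_env r' (xlow M X) c (xi M X c)}"
  have a0: "0 \<le> a" unfolding a_def using xlow_props' by simp
  have ra: "0 < r' a" using H L_nonneg[OF H] unfolding a_def by simp
  have inC: "c \<le> cstar M X r'" if "c \<in> C" for c
  proof -
    from that have c: "xlow M X < c" "ereal c < xup M X" "r' c \<ge> rho M X c * concave_env r' (xlow M X) c (xi M X c)"
      unfolding C_def by auto
    have "(\<integral>\<omega>. r' (X \<omega>) * indicator {..<c} (X \<omega>) \<partial>M) \<le> r' c"
      using E_le_env(1)[OF c(1,2)] c(3) by simp
    moreover have "0 \<le> c" using c(1) a0 unfolding a_def by simp
    ultimately show ?thesis by (intro cstar_ge[OF H]) auto
  qed
  obtain c0 where c0: "a < c0" "ereal c0 < xup M X"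
  proof (cases "xup M X = \<infinity>")
    case True then show ?thesis using that[of "a + 1"] by simp
  next
    case False
    define u where "u = real_of_ereal (xup M X)"
    have au: "a < u" using finite_case[OF H False] unfolding a_def u_def by simp
    have "xup M X = ereal u" unfolding u_def using xup_finite'[OF False] .
    then show ?thesis using that[of "(a + u) / 2"] au by simp
  qed
  have r0: "rho M X c0 < 1" using rho_lt1'[OF c0(2)] c0(1) a0 by simp
  then have "rho M X c0 * r' a < r' a" using ra by simp
  then obtain c where c: "a < c" "c < c0" "rho M X c0 * r' a < r' c"
    using cont_right[OF a0 _ c0(1)] by blast
  have "c \<in> C"
  proof -
    have "ereal c < ereal c0" using c(2) by simp
    then have cx: "ereal c < xup M X" using c0(2) by (rule less_trans)
    have "rho M X c * concave_env r' (xlow M X) c (xi M X c) \<le> rho M X c * r' a"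
      using E_le_env(2)[OF _ cx] c(1) rho_nonneg'[of c] unfolding a_def by (intro mult_left_mono) auto
    also have "\<dots> \<le> rho M X c0 * r' a" using rho_mono'[of c c0] c(2) ra by (intro mult_right_mono) auto
    finally show ?thesis unfolding C_def using c cx unfolding a_def by simp
  qed
  then have "C \<noteq> {}" by auto
  then have "Sup C \<le> cstar M X r'" using inC by (rule cSup_least)
  then show ?thesis unfolding clow_def C_def .
qed

lemma affine_concave: "concave_on {x..y} (\<lambda>t. \<alpha> + \<beta> * t :: real)"
  unfolding concave_on_iff
proof (intro conjI ballI allI impI)
  show "convex {x..y}" by simp
  fix p q :: real and u v :: real assume h: "0 \<le> u" "0 \<le> v" "u + v = 1"
  have "\<alpha> * u + \<alpha> * v = \<alpha>" using h(3) by (metis distrib_left mult.right_neutral)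
  then show "u * (\<alpha> + \<beta> * p) + v * (\<alpha> + \<beta> * q) \<le> \<alpha> + \<beta> * (u *\<^sub>R p + v *\<^sub>R q)"
    by (simp add: algebra_simps)
qed

lemma part2:
  assumes H: "r' (xlow M X) > deriv_at_xup M X r'"
    and rlog: "\<forall>x\<ge>0. r x = ln (1 + x) / 2"
  shows "clow M X r' = Sup {c. xlow M X < c \<and> ereal c < xup M X \<and> c \<le> zeta M X c}"
proof -
  define f where "f x = 1 / (2 * (1 + x))" for x :: real
  have rf: "r' x = f x" if x: "0 \<le> x" for x
  proof -
    have d1: "((\<lambda>x. ln (1 + x) / 2) has_real_derivative f x) (at x within {0..})"
    proof -
      have "((\<lambda>x. ln (1 + x) / 2) has_real_derivative (1 / (1 + x)) / 2) (at x within {0..})"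
        using x by (auto intro!: derivative_eq_intros simp: frac_eq_eq add_nonneg_eq_0_iff)
      moreover have "(1 / (1 + x)) / 2 = f x" unfolding f_def by simp
      ultimately show ?thesis by simp
    qed
    have d2: "(r has_real_derivative f x) (at x within {0..})"
      by (rule has_field_derivative_transform_within[OF d1, where d=1]) (use x rlog in auto)
    have nb: "at x within {0..} \<noteq> bot"
    proof
      assume "at x within {0..} = bot"
      moreover have "at x within {x<..} \<le> at x within {0..}" using x by (intro at_le) auto
      ultimately have "at_right x = bot" by (simp add: bot_unique)
      then show False using trivial_limit_at_right_real[of x] by simp
    qed
    show ?thesis
      using vector_derivative_unique_within[OF nb] rder x d2
      unfolding has_real_derivative_iff_has_vector_derivative by blast
  qed
  have eqset: "(r' c \<ge> rho M X c * concave_env r' (xlow M X) c (xi M X c)) \<longleftrightarrow> c \<le> zeta M X c"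
    if c: "xlow M X < c" "ereal c < xup M X" for c
  proof -
    define a where "a = xlow M X"
    define \<xi> where "\<xi> = xi M X c"
    define \<rho> where "\<rho> = rho M X c"
    have a0: "0 \<le> a" unfolding a_def using xlow_props' by simp
    have ac: "a < c" using c unfolding a_def by simp
    have rp: "0 < \<rho>" unfolding \<rho>_def using rho_pos'[OF c(1)] .
    have xr: "a \<le> \<xi>" "\<xi> \<le> c" using xi_facts[OF c] unfolding a_def \<xi>_def by auto
    define h where "h y = f a + (y - a) / (c - a) * (f c - f a)" for y
    have hform: "h y = (1 + a + c - y) / (2 * (1 + a) * (1 + c))" for y
    proof -
      have "f a + (y - a) / (c - a) * (f c - f a) = 1/(2*(1+a)) + ((1+y) - (1+a)) / ((1+c) - (1+a)) * (1/(2*(1+c)) - 1/(2*(1+a)))"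
        unfolding f_def by simp
      also have "\<dots> = ((1+a) + (1+c) - (1+y)) / (2*(1+a)*(1+c))"
        by (rule hform_aux) (use ac a0 in auto)
      finally show ?thesis unfolding h_def by simp
    qed
    have hc: "concave_on {a..c} h"
    proof -
      define k where "k = (f c - f a) / (c - a)"
      have "h y = (f a - a * k) + k * y" for y
      proof -
        have "(y - a) / (c - a) * (f c - f a) = (y - a) * k" unfolding k_def by simp
        then show ?thesis unfolding h_def by (simp add: algebra_simps)
      qed
      then have "h = (\<lambda>y. (f a - a * k) + k * y)" by (simp add: fun_eq_iff)
      then show ?thesis using affine_concave by simp
    qed
    have hm: "\<forall>y\<in>{a..c}. r' y \<le> h y"
    proof
      fix y assume y: "y \<in> {a..c}"
      then have "h y - f y = ((1+y) - (1+a)) * ((1+c) - (1+y)) / (2 * (1 + a) * (1 + c) * (1 + y))"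
      proof -
        have "((1+a) + (1+c) - (1+y)) / (2 * (1+a) * (1+c)) - 1 / (2 * (1+y)) = ((1+y) - (1+a)) * ((1+c) - (1+y)) / (2 * (1 + a) * (1 + c) * (1 + y))"
          using a0 y by (intro hdiff_aux) auto
        moreover have "(1+a) + (1+c) - (1+y) = 1 + a + c - y" by simp
        ultimately show ?thesis unfolding hform f_def by argo
      qed
      then have "h y - f y = (y - a) * (c - y) / (2 * (1 + a) * (1 + c) * (1 + y))" by simp
      moreover have "0 \<le> (y - a) * (c - y) / (2 * (1 + a) * (1 + c) * (1 + y))"
        using y a0 by (intro divide_nonneg_pos mult_nonneg_nonneg) auto
      ultimately have "f y \<le> h y" by linarith
      then show "r' y \<le> h y" using rf[of y] y a0 by simp
    qed
    have env: "concave_env r' a c \<xi> = h \<xi>"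
      unfolding concave_env_def
    proof (rule cInf_eq_minimum)
      show "h \<xi> \<in> {g \<xi> |g. concave_on {a..c} g \<and> (\<forall>y\<in>{a..c}. r' y \<le> g y)}"
        using hc hm by blast
      fix z assume "z \<in> {g \<xi> |g. concave_on {a..c} g \<and> (\<forall>y\<in>{a..c}. r' y \<le> g y)}"
      then obtain g where g: "z = g \<xi>" "concave_on {a..c} g" "\<forall>y\<in>{a..c}. r' y \<le> g y" by auto
      define t where "t = (\<xi> - a) / (c - a)"
      have t0: "0 \<le> t" "t \<le> 1" unfolding t_def using xr ac by (auto simp: field_simps)
      have xt: "(1 - t) *\<^sub>R a + t *\<^sub>R c = \<xi>"
      proof -
        have "t * (c - a) = \<xi> - a" unfolding t_def using ac by simp
        then show ?thesis by (simp add: algebra_simps)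
      qed
      have "(1 - t) * g a + t * g c \<le> g \<xi>"
        using concave_onD[OF g(2) t0, of a c] xt ac by simp
      moreover have "(1 - t) * f a + t * f c \<le> (1 - t) * g a + t * g c"
        using g(3) rf a0 ac t0 by (intro add_mono mult_left_mono) auto
      moreover have "h \<xi> = (1 - t) * f a + t * f c"
      proof -
        have "h \<xi> = f a + t * (f c - f a)" unfolding h_def t_def by simp
        then show ?thesis by (simp add: algebra_simps)
      qed
      ultimately show "h \<xi> \<le> z" using g(1) by simp
    qed
    have "(r' c \<ge> \<rho> * h \<xi>) \<longleftrightarrow> \<rho> * (1 + a + c - \<xi>) \<le> 1 + a"
    proof -
      have D: "0 < 2 * (1 + a) * (1 + c)" using a0 ac by simp
      have 1: "r' c = (1 + a) / (2 * (1 + a) * (1 + c))"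
      proof -
        have "(1 + a) / (2 * (1 + a) * (1 + c)) = 1 / (2 * (1 + c))"
          by (rule cancel_aux) (use a0 ac in auto)
        then show ?thesis using rf[of c] a0 ac unfolding f_def by simp
      qed
      have 2: "\<rho> * h \<xi> = (\<rho> * (1 + a + c - \<xi>)) / (2 * (1 + a) * (1 + c))" by (simp add: hform)
      have "(r' c \<ge> \<rho> * h \<xi>) \<longleftrightarrow> (\<rho> * (1 + a + c - \<xi>)) / (2 * (1 + a) * (1 + c)) \<le> (1 + a) / (2 * (1 + a) * (1 + c))"
        by (simp only: 1 2)
      also have "\<dots> \<longleftrightarrow> \<rho> * (1 + a + c - \<xi>) \<le> 1 + a"
        using D by (simp only: divide_le_cancel) simp
      finally show ?thesis .
    qed
    also have "\<dots> \<longleftrightarrow> c \<le> zeta M X c"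
    proof -
      have "zeta M X c = ((1 - \<rho>) * (1 + a) + \<rho> * \<xi>) / \<rho>" unfolding zeta_def a_def \<rho>_def \<xi>_def ..
      then have "c \<le> zeta M X c \<longleftrightarrow> c * \<rho> \<le> (1 - \<rho>) * (1 + a) + \<rho> * \<xi>"
        using rp by (simp add: le_divide_eq)
      then show ?thesis by (simp add: algebra_simps)
    qed
    finally show ?thesis using env unfolding a_def \<xi>_def \<rho>_def by simp
  qed
  show ?thesis unfolding clow_def
    by (rule arg_cong[where f=Sup], rule Collect_cong) (use eqset in blast)
qed

end

theorem proposition2:
  fixes M :: "'a measure" and X :: "'a \<Rightarrow> real"
    and r r' :: "real \<Rightarrow> real"
  assumes "prob_space M"
    and "X \<in> borel_measurable M"
    and "\<forall>\<omega>\<in>space M. 0 \<le> X \<omega>"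
    and "\<forall>x\<ge>0. 0 \<le> r x"
    and "mono_on {0..} r"
    and "concave_on {0..} r"
    and "\<forall>x\<ge>0. (r has_real_derivative r' x) (at x within {0..})"
    and "continuous_on {0..} r'"
    and "r' (xlow M X) > deriv_at_xup M X r'"
  shows "cstar M X r' \<ge> clow M X r' \<and>
         ((\<forall>x\<ge>0. r x = ln (1 + x) / 2) \<longrightarrow>
            clow M X r' = Sup {c. xlow M X < c \<and> ereal c < xup M X \<and> c \<le> zeta M X c})"
proof -
  have 1: "clow M X r' \<le> cstar M X r'"
    by (rule part1[OF assms(1,2,3,5,6,7,8,9)])
  have 2: "(\<forall>x\<ge>0. r x = ln (1 + x) / 2) \<longrightarrow>
            clow M X r' = Sup {c. xlow M X < c \<and> ereal c < xup M X \<and> c \<le> zeta M X c}"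
    using part2[OF assms(1,2,3,5,6,7,8,9)] by blast
  show ?thesis using 1 2 by blast
qed

end
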